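(* Let $\gamma\in(0,2)$, $d\ge1$ and $G\in S^d_{\gamma,0}$. Then $\lim_{n\to\infty}Y^n_{\mathrm{SEP}}(G)=0$, where $$Y^n_{\mathrm{SEP}}(G)=\sup_{s\in[0,T]}\frac{n^\gamma}{n^d}\sum_{\hat x\in\mathbb Z^d}\Big|\sum_{\hat y\in\mathbb Z^d}\big[G_s(\tfrac{\hat y}n)-G_s(\tfrac{\hat x}n)\big]\mathbb 1_{\{\{\hat x,\hat y\}\in\mathcal F\}}\mathbb 1_{\{|\hat y-\hat x|=1\}}\Big|.$$
   Context: Fix $T>0$. Bonds are unordered pairs $\{\hat x,\hat y\}$ of distinct sites of $\mathbb Z^d$; $\mathcal S=\{\{\hat x,\hat y\}:x_d<0\le y_d\}$ and $\mathcal F$ is the set of bonds not in $\mathcal S$. Test functions: $C^{1,2}$ = functions on $[0,T]\times\mathbb R^d$ continuously differentiable in time and twice in space; $C^{1,2}_c$ those with compact support; $S^{1,2}$ those $G\in C^{1,2}$ with $\partial_sG_s$ twice continuously differentiable in space and $\sup_s\sup_{\hat u}|\hat u|^k\sum_{H\in\{G_s,\partial_sG_s\}}(|H|+\sum_j|\partial_jH|+\sum_{i,j}|\partial_{ij}H|)<\infty$ for all $k\in\mathbb N$. $S^d_\gamma=C^{1,2}_c$ if $\gamma\in(0,1]$ or $d\ge2$; $S^{1,2}([0,T]\times\mathbb R)$ if $d=1,\gamma\in(1,2)$. $S^d_{\gamma,0}$: functions $G$ with $G_t(\hat u)=\mathbb 1_{u_d<0}G^-_t(\hat u)+\mathbb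 1_{u_d\ge0}G^+_t(\hat u)$ for all $t,\hat u$, for some $G^\pm\in S^d_\gamma$. *)

theory Defs
  imports "HOL-Analysis.Analysis"
begin

text \<open>Space R^d is modelled as (real,'d) vec with 'd a finite linearly ordered index type;
 the distinguished coordinate u_d is the one with the greatest index.\<close>

definition lastc :: "'d::{finite,linorder}" where
  "lastc = Max UNIV"

definition Zd :: "((real,'d::finite) vec) set" where
  "Zd = {x. \<forall>i. x $ i \<in> \<int>}"

definition bondS :: "(real,'d::{finite,linorder}) vec \<Rightarrow> (real,'d) vec \<Rightarrow> bool" where
  "bondS x y \<longleftrightarrow> (x $ lastc < 0 \<and> 0 \<le> y $ lastc) \<or> (y $ lastc < 0 \<and> 0 \<le> x $ lastc)"

definition bondF :: "(real,'d::{finite,linorder}) vec \<Rightarrow> (real,'d) vec \<Rightarrow> bool" where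
  "bondF x y \<longleftrightarrow> x \<noteq> y \<and> \<not> bondS x y"

definition has_partials2 ::
  "((real,'d::finite) vec \<Rightarrow> real) \<Rightarrow> ('d \<Rightarrow> (real,'d) vec \<Rightarrow> real) \<Rightarrow> ('d \<Rightarrow> 'd \<Rightarrow> (real,'d) vec \<Rightarrow> real) \<Rightarrow> bool" where
  "has_partials2 H D1 D2 \<longleftrightarrow>
     (\<forall>u j. ((\<lambda>h. H (u + h *\<^sub>R axis j 1)) has_real_derivative D1 j u) (at 0)) \<and>
     (\<forall>u i j. ((\<lambda>h. D1 j (u + h *\<^sub>R axis i 1)) has_real_derivative D2 i j u) (at 0))"

definition jcont :: "real \<Rightarrow> (real \<Rightarrow> (real,'d::finite) vec \<Rightarrow> real) \<Rightarrow> bool" where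
  "jcont T F \<longleftrightarrow> continuous_on ({0..T} \<times> UNIV) (\<lambda>(s,u). F s u)"

definition C12_with ::
  "real \<Rightarrow> (real \<Rightarrow> (real,'d::finite) vec \<Rightarrow> real) \<Rightarrow> (real \<Rightarrow> (real,'d) vec \<Rightarrow> real)
    \<Rightarrow> (real \<Rightarrow> 'd \<Rightarrow> (real,'d) vec \<Rightarrow> real) \<Rightarrow> (real \<Rightarrow> 'd \<Rightarrow> 'd \<Rightarrow> (real,'d) vec \<Rightarrow> real) \<Rightarrow> bool" where
  "C12_with T G Gt D1 D2 \<longleftrightarrow>
     (\<forall>s\<in>{0..T}. \<forall>u. ((\<lambda>t. G t u) has_real_derivative Gt s u) (at s within {0..T})) \<and>
     (\<forall>s\<in>{0..T}. has_partials2 (G s) (D1 s) (D2 s)) \<and>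
     jcont T G \<and> jcont T Gt \<and> (\<forall>j. jcont T (\<lambda>s. D1 s j)) \<and> (\<forall>i j. jcont T (\<lambda>s. D2 s i j))"

definition C12 :: "real \<Rightarrow> (real \<Rightarrow> (real,'d::finite) vec \<Rightarrow> real) \<Rightarrow> bool" where
  "C12 T G \<longleftrightarrow> (\<exists>Gt D1 D2. C12_with T G Gt D1 D2)"

definition C12c :: "real \<Rightarrow> (real \<Rightarrow> (real,'d::finite) vec \<Rightarrow> real) \<Rightarrow> bool" where
  "C12c T G \<longleftrightarrow> C12 T G \<and> (\<exists>R. \<forall>s\<in>{0..T}. \<forall>u. R < norm u \<longrightarrow> G s u = 0)"

definition S12 :: "real \<Rightarrow> (real \<Rightarrow> (real,'d::finite) vec \<Rightarrow> real) \<Rightarrow> bool" where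
  "S12 T G \<longleftrightarrow> (\<exists>Gt D1 D2 E1 E2.
     C12_with T G Gt D1 D2 \<and>
     (\<forall>s\<in>{0..T}. has_partials2 (Gt s) (E1 s) (E2 s)) \<and>
     (\<forall>j. jcont T (\<lambda>s. E1 s j)) \<and> (\<forall>i j. jcont T (\<lambda>s. E2 s i j)) \<and>
     (\<forall>k::nat. \<exists>C. \<forall>s\<in>{0..T}. \<forall>u.
        norm u ^ k *
          ((\<bar>G s u\<bar> + (\<Sum>j\<in>UNIV. \<bar>D1 s j u\<bar>) + (\<Sum>i\<in>UNIV. \<Sum>j\<in>UNIV. \<bar>D2 s i j u\<bar>)) +
           (\<bar>Gt s u\<bar> + (\<Sum>j\<in>UNIV. \<bar>E1 s j u\<bar>) + (\<Sum>i\<in>UNIV. \<Sum>j\<in>UNIV. \<bar>E2 s i j u\<bar>)))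
        \<le> C))"

definition S_gamma :: "real \<Rightarrow> real \<Rightarrow> (real \<Rightarrow> (real,'d::finite) vec \<Rightarrow> real) \<Rightarrow> bool" where
  "S_gamma T \<gamma> G \<longleftrightarrow>
     (if \<gamma> \<le> 1 \<or> CARD('d) \<ge> 2 then C12c T G else S12 T G)"

definition S_gamma0 :: "real \<Rightarrow> real \<Rightarrow> (real \<Rightarrow> (real,'d::{finite,linorder}) vec \<Rightarrow> real) \<Rightarrow> bool" where
  "S_gamma0 T \<gamma> G \<longleftrightarrow> (\<exists>Gm Gp. S_gamma T \<gamma> Gm \<and> S_gamma T \<gamma> Gp \<and>
     (\<forall>t\<in>{0..T}. \<forall>u. G t u = (if u $ lastc < 0 then Gm t u else Gp t u)))"

text \<open>Y^n_SEP(G), valued in [0,\<infinity>] (series of nonnegative terms).\<close>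
definition Y_SEP :: "real \<Rightarrow> real \<Rightarrow> (real \<Rightarrow> (real,'d::{finite,linorder}) vec \<Rightarrow> real) \<Rightarrow> nat \<Rightarrow> ennreal" where
  "Y_SEP T \<gamma> G n = (SUP s\<in>{0..T}.
     ennreal (real n powr \<gamma> / real n ^ CARD('d)) *
     (\<Sum>\<^sub>\<infinity>x\<in>Zd. ennreal \<bar>\<Sum>y\<in>{y\<in>Zd. norm (y - x) = 1}.
        (G s ((1 / real n) *\<^sub>R y) - G s ((1 / real n) *\<^sub>R x)) * (if bondF x y then 1 else 0)\<bar>))"

end

theory Submission
  imports Defs
begin


lemma diff1:
  fixes \<phi> \<phi>1 :: "real \<Rightarrow> real"
  assumes d: "\<And>t. (\<phi> has_real_derivative \<phi>1 t) (at t)" and h: "h > 0"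
    and b: "\<And>t. \<bar>t\<bar> \<le> h \<Longrightarrow> \<bar>\<phi>1 t\<bar> \<le> A"
  shows "\<bar>\<phi> h - \<phi> 0\<bar> \<le> h * A" "\<bar>\<phi> (-h) - \<phi> 0\<bar> \<le> h * A"
proof -
  obtain z where z: "0 < z" "z < h" "\<phi> h - \<phi> 0 = (h - 0) * \<phi>1 z"
    using MVT2[of 0 h \<phi> \<phi>1] h d by blast
  have "\<bar>\<phi>1 z\<bar> \<le> A" using b z by auto
  then show "\<bar>\<phi> h - \<phi> 0\<bar> \<le> h * A" using z h by (simp add: abs_mult)
  obtain w where w: "-h < w" "w < 0" "\<phi> 0 - \<phi> (-h) = (0 - -h) * \<phi>1 w"
    using MVT2[of "-h" 0 \<phi> \<phi>1] h d by auto
  have "\<bar>\<phi>1 w\<bar> \<le> A" using b w by auto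
  then show "\<bar>\<phi> (-h) - \<phi> 0\<bar> \<le> h * A" using w h
    by (simp add: abs_mult abs_minus_commute)
qed

lemma diff2:
  fixes \<phi> \<phi>1 \<phi>2 :: "real \<Rightarrow> real"
  assumes d: "\<And>t. (\<phi> has_real_derivative \<phi>1 t) (at t)"
    and d2: "\<And>t. (\<phi>1 has_real_derivative \<phi>2 t) (at t)" and h: "h > 0"
    and b: "\<And>t. \<bar>t\<bar> \<le> h \<Longrightarrow> \<bar>\<phi>2 t\<bar> \<le> A"
  shows "\<bar>\<phi> h + \<phi> (-h) - 2 * \<phi> 0\<bar> \<le> 2 * h^2 * A"
proof -
  obtain z where z: "0 < z" "z < h" "\<phi> h - \<phi> 0 = (h - 0) * \<phi>1 z"
    using MVT2[of 0 h \<phi> \<phi>1] h d by blast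
  obtain w where w: "-h < w" "w < 0" "\<phi> 0 - \<phi> (-h) = (0 - -h) * \<phi>1 w"
    using MVT2[of "-h" 0 \<phi> \<phi>1] h d by auto
  obtain e where e: "w < e" "e < z" "\<phi>1 z - \<phi>1 w = (z - w) * \<phi>2 e"
    using MVT2[of w z \<phi>1 \<phi>2] z w d2 by auto
  have eb: "\<bar>\<phi>2 e\<bar> \<le> A" using b e z w by auto
  have "\<phi> h + \<phi> (-h) - 2 * \<phi> 0 = h * (\<phi>1 z - \<phi>1 w)" using z w
    by (simp add: algebra_simps)
  also have "\<dots> = h * (z - w) * \<phi>2 e" using e by simp
  also have "\<bar>\<dots>\<bar> = h * (z - w) * \<bar>\<phi>2 e\<bar>" using z w h by (simp add: abs_mult)
  also have "\<dots> \<le> h * (2*h) * A"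
    using eb z w h by (intro mult_mono) auto
  finally show ?thesis by (simp add: power2_eq_square)
qed

lemma line_deriv:
  assumes "has_partials2 H D1 D2"
  shows "((\<lambda>t. H (u + t *\<^sub>R axis i 1)) has_real_derivative D1 i (u + t *\<^sub>R axis i 1)) (at t)"
    "((\<lambda>t. D1 i (u + t *\<^sub>R axis i 1)) has_real_derivative D2 i i (u + t *\<^sub>R axis i 1)) (at t)"
proof -
  have e: "\<And>k. u + (k + t) *\<^sub>R axis i 1 = (u + t *\<^sub>R axis i 1) + k *\<^sub>R axis i (1::real)"
    by (simp add: scaleR_left_distrib algebra_simps)
  have a: "((\<lambda>k. H ((u + t *\<^sub>R axis i 1) + k *\<^sub>R axis i 1)) has_real_derivative D1 i (u + t *\<^sub>R axis i 1)) (at 0)"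
    using assms unfolding has_partials2_def by blast
  have "((\<lambda>k. H (u + (k + t) *\<^sub>R axis i 1)) has_real_derivative D1 i (u + t *\<^sub>R axis i 1)) (at 0)"
    using a unfolding e .
  then show "((\<lambda>t. H (u + t *\<^sub>R axis i 1)) has_real_derivative D1 i (u + t *\<^sub>R axis i 1)) (at t)"
    using DERIV_shift[of "\<lambda>t. H (u + t *\<^sub>R axis i 1)" _ 0 t] by simp
  have b: "((\<lambda>k. D1 i ((u + t *\<^sub>R axis i 1) + k *\<^sub>R axis i 1)) has_real_derivative D2 i i (u + t *\<^sub>R axis i 1)) (at 0)"
    using assms unfolding has_partials2_def by blast
  have "((\<lambda>k. D1 i (u + (k + t) *\<^sub>R axis i 1)) has_real_derivative D2 i i (u + t *\<^sub>R axis i 1)) (at 0)"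
    using b unfolding e .
  then show "((\<lambda>t. D1 i (u + t *\<^sub>R axis i 1)) has_real_derivative D2 i i (u + t *\<^sub>R axis i 1)) (at t)"
    using DERIV_shift[of "\<lambda>t. D1 i (u + t *\<^sub>R axis i 1)" _ 0 t] by simp
qed

lemma vec_terms:
  assumes p: "has_partials2 H D1 D2" and h: "h > 0"
    and b: "\<And>t. \<bar>t\<bar> \<le> h \<Longrightarrow> \<bar>D1 i (u + t *\<^sub>R axis i 1)\<bar> \<le> A \<and> \<bar>D2 i i (u + t *\<^sub>R axis i 1)\<bar> \<le> A"
  shows "\<bar>H (u + h *\<^sub>R axis i 1) + H (u + (-h) *\<^sub>R axis i 1) - 2 * H u\<bar> \<le> 2 * h^2 * A"
    "\<bar>H (u + h *\<^sub>R axis i 1) - H u\<bar> \<le> h * A"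
    "\<bar>H (u + (-h) *\<^sub>R axis i 1) - H u\<bar> \<le> h * A"
proof -
  note l = line_deriv[OF p, where u=u and i=i]
  have "\<bar>H (u + h *\<^sub>R axis i 1) + H (u + (-h) *\<^sub>R axis i 1) - 2 * H (u + 0 *\<^sub>R axis i 1)\<bar> \<le> 2 * h^2 * A"
    by (rule diff2[OF l(1) l(2) h, of A]) (use b in auto)
  then show "\<bar>H (u + h *\<^sub>R axis i 1) + H (u + (-h) *\<^sub>R axis i 1) - 2 * H u\<bar> \<le> 2 * h^2 * A" by simp
  have "\<bar>H (u + h *\<^sub>R axis i 1) - H (u + 0 *\<^sub>R axis i 1)\<bar> \<le> h * A"
       "\<bar>H (u + (-h) *\<^sub>R axis i 1) - H (u + 0 *\<^sub>R axis i 1)\<bar> \<le> h * A"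
    by (rule diff1[OF l(1) h, of A]; use b in auto)+
  then show "\<bar>H (u + h *\<^sub>R axis i 1) - H u\<bar> \<le> h * A" "\<bar>H (u + (-h) *\<^sub>R axis i 1) - H u\<bar> \<le> h * A"
    by simp_all
qed



lemma axis_comp: "(axis i (1::real) :: (real,'d::finite) vec) $ j = (if j = i then 1 else 0)"
  by (simp add: axis_def)

lemma Zd_add: "x \<in> Zd \<Longrightarrow> y \<in> Zd \<Longrightarrow> x + y \<in> Zd"
  by (auto simp: Zd_def)
lemma Zd_diff: "x \<in> Zd \<Longrightarrow> y \<in> Zd \<Longrightarrow> x - y \<in> Zd"
  by (auto simp: Zd_def)
lemma Zd_axis: "axis i (1::real) \<in> Zd"
  by (auto simp: Zd_def axis_comp)

lemma int_abs_le1: "(r::real) \<in> \<int> \<Longrightarrow> \<bar>r\<bar> \<le> 1 \<Longrightarrow> r = -1 \<or> r = 0 \<or> r = 1"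
proof -
  assume "r \<in> \<int>" "\<bar>r\<bar> \<le> 1"
  then obtain k where k: "r = of_int k" by (auto elim: Ints_cases)
  then have "\<bar>k\<bar> \<le> 1" using \<open>\<bar>r\<bar> \<le> 1\<close> by linarith
  then have "k = -1 \<or> k = 0 \<or> k = 1" by auto
  then show ?thesis using k by auto
qed

lemma unit_int_vec:
  fixes z :: "(real,'d::finite) vec"
  assumes z: "z \<in> Zd" and n: "norm z = 1"
  shows "\<exists>i. z = axis i 1 \<or> z = - axis i 1"
proof -
  have c: "\<And>j. z$j = -1 \<or> z$j = 0 \<or> z$j = 1"
    using z component_le_norm_cart[of z] n by (intro int_abs_le1) (auto simp: Zd_def)
  have "z \<noteq> 0" using n by auto
  then obtain i where i: "z$i \<noteq> 0" by (auto simp: vec_eq_iff)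
  have sq: "(\<Sum>j\<in>UNIV. z$j * z$j) = 1"
    using n by (metis inner_real_def inner_vec_def norm_eq_1)
  have "(\<Sum>j\<in>UNIV. z$j * z$j) = z$i * z$i + (\<Sum>j\<in>UNIV-{i}. z$j * z$j)"
    by (simp add: sum.remove)
  moreover have "z$i * z$i = 1" using c[of i] i by auto
  ultimately have "(\<Sum>j\<in>UNIV-{i}. z$j * z$j) = 0" using sq by simp
  then have "\<forall>j\<in>UNIV-{i}. z$j * z$j = 0"
    by (subst (asm) sum_nonneg_eq_0_iff) auto
  then have o: "\<And>j. j \<noteq> i \<Longrightarrow> z$j = 0" by auto
  show ?thesis
  proof (cases "z$i = 1")
    case True
    then have "z = axis i 1" using o by (auto simp: vec_eq_iff axis_comp)
    then show ?thesis by blast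
  next
    case False
    then have "z$i = -1" using c[of i] i by auto
    then have "z = - axis i 1" using o by (auto simp: vec_eq_iff axis_comp)
    then show ?thesis by blast
  qed
qed

lemma nbrs:
  fixes x :: "(real,'d::finite) vec"
  assumes x: "x \<in> Zd"
  shows "{y\<in>Zd. norm (y - x) = 1} = range (\<lambda>i. x + axis i 1) \<union> range (\<lambda>i. x - axis i 1)"
proof
  show "{y\<in>Zd. norm (y - x) = 1} \<subseteq> range (\<lambda>i. x + axis i 1) \<union> range (\<lambda>i. x - axis i 1)"
  proof
    fix y assume y: "y \<in> {y\<in>Zd. norm (y - x) = 1}"
    then have "y - x \<in> Zd" using x Zd_diff by auto
    then obtain i where "y - x = axis i 1 \<or> y - x = - axis i 1"
      using unit_int_vec y by blast
    then have "y = x + axis i 1 \<or> y = x - axis i 1" by (auto simp: algebra_simps)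
    then show "y \<in> range (\<lambda>i. x + axis i 1) \<union> range (\<lambda>i. x - axis i 1)" by auto
  qed
  show "range (\<lambda>i. x + axis i 1) \<union> range (\<lambda>i. x - axis i 1) \<subseteq> {y\<in>Zd. norm (y - x) = 1}"
    using x Zd_axis by (auto intro: Zd_add Zd_diff)
qed

lemma nbr_sum:
  fixes x :: "(real,'d::finite) vec" and f :: "(real,'d) vec \<Rightarrow> real"
  assumes x: "x \<in> Zd"
  shows "(\<Sum>y\<in>{y\<in>Zd. norm (y - x) = 1}. f y) = (\<Sum>i\<in>UNIV. f (x + axis i 1) + f (x - axis i 1))"
proof -
  have i1: "inj (\<lambda>i. x + axis i (1::real))" by (auto intro!: injI simp: axis_eq_axis)
  have i2: "inj (\<lambda>i. x - axis i (1::real))" by (auto intro!: injI simp: axis_eq_axis)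
  have dj: "range (\<lambda>i. x + axis i 1) \<inter> range (\<lambda>i. x - axis i (1::real)) = {}"
  proof (rule ccontr)
    assume "range (\<lambda>i. x + axis i 1) \<inter> range (\<lambda>i. x - axis i (1::real)) \<noteq> {}"
    then obtain i j where "x + axis i 1 = x - axis j (1::real)" by auto
    then have "(x + axis i 1) $ i = (x - axis j (1::real)) $ i" by simp
    then show False by (auto simp: axis_comp split: if_splits)
  qed
  show ?thesis
    unfolding nbrs[OF x]
    by (simp add: sum.union_disjoint[OF _ _ dj] sum.reindex[OF i1] sum.reindex[OF i2] sum.distrib)
qed



lemma int_between: "(r::real) \<in> \<int> \<Longrightarrow> r < 0 \<Longrightarrow> 0 \<le> r + 1 \<Longrightarrow> r = -1"
  by (auto elim!: Ints_cases)
lemma int_between2: "(r::real) \<in> \<int> \<Longrightarrow> r - 1 < 0 \<Longrightarrow> 0 \<le> r \<Longrightarrow> r = 0"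
  by (auto elim!: Ints_cases)

lemma pointwise:
  fixes Hm Hp g :: "(real,'d::{finite,linorder}) vec \<Rightarrow> real" and n :: nat
  assumes pm: "has_partials2 Hm D1m D2m" and pp: "has_partials2 Hp D1p D2p"
    and n: "n \<ge> 1" and x: "x \<in> Zd"
    and g: "\<And>u. g u = (if u $ lastc < 0 then Hm u else Hp u)"
    and bm: "\<And>v i. norm (v - (1 / real n) *\<^sub>R x) \<le> 1 / real n \<Longrightarrow>
              \<bar>D1m i v\<bar> \<le> A \<and> \<bar>D2m i i v\<bar> \<le> A \<and> \<bar>D1p i v\<bar> \<le> A \<and> \<bar>D2p i i v\<bar> \<le> A"
  shows "\<bar>\<Sum>y\<in>{y\<in>Zd. norm (y - x) = 1}.
        (g ((1 / real n) *\<^sub>R y) - g ((1 / real n) *\<^sub>R x)) * (if bondF x y then 1 else 0)\<bar>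
     \<le> real CARD('d) * (2 * (1 / real n)^2 * A) + (if x $ lastc = 0 \<or> x $ lastc = -1 then (1 / real n) * A else 0)"
proof -
  define h where "h = 1 / real n"
  define u where "u = h *\<^sub>R x"
  define L :: 'd where "L = lastc"
  define H where "H = (if x $ L < 0 then Hm else Hp)"
  define D1 where "D1 = (if x $ L < 0 then D1m else D1p)"
  define D2 where "D2 = (if x $ L < 0 then D2m else D2p)"
  have h: "h > 0" using n by (simp add: h_def)
  have p: "has_partials2 H D1 D2" using pm pp by (simp add: H_def D1_def D2_def)
  have b: "\<And>v i. norm (v - u) \<le> h \<Longrightarrow> \<bar>D1 i v\<bar> \<le> A \<and> \<bar>D2 i i v\<bar> \<le> A"
    using bm unfolding u_def h_def D1_def D2_def by auto
  have "\<bar>D1 L u\<bar> \<le> A" using b[of u L] h by simp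
  then have A0: "A \<ge> 0" by (meson abs_ge_zero order_trans)
  have bl: "\<And>t i. \<bar>t\<bar> \<le> h \<Longrightarrow> \<bar>D1 i (u + t *\<^sub>R axis i 1)\<bar> \<le> A \<and> \<bar>D2 i i (u + t *\<^sub>R axis i 1)\<bar> \<le> A"
    by (rule b) simp
  note vt = vec_terms[OF p h bl]
  have gu: "g u = H u" using g h by (simp add: u_def H_def L_def zero_less_mult_iff mult_less_0_iff)
  have gy: "g (h *\<^sub>R y) = H (h *\<^sub>R y)" if "bondF x y" for y
  proof -
    have "(y $ L < 0) = (x $ L < 0)" using that unfolding bondF_def bondS_def L_def by auto
    then show ?thesis using g h by (simp add: H_def L_def zero_less_mult_iff mult_less_0_iff)
  qed
  have xL: "x $ L \<in> \<int>" using x by (simp add: Zd_def)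
  have tm: "\<bar>(g (h *\<^sub>R (x + axis i 1)) - g u) * (if bondF x (x + axis i 1) then 1 else 0)
      + (g (h *\<^sub>R (x - axis i 1)) - g u) * (if bondF x (x - axis i 1) then 1 else 0)\<bar>
      \<le> 2 * h^2 * A + (if i = L \<and> (x $ L = 0 \<or> x $ L = -1) then h * A else 0)" for i
  proof -
    have e1: "h *\<^sub>R (x + axis i 1) = u + h *\<^sub>R axis i 1" by (simp add: u_def algebra_simps)
    have e2: "h *\<^sub>R (x - axis i 1) = u + (-h) *\<^sub>R axis i 1" by (simp add: u_def algebra_simps)
    have nz1: "x \<noteq> x + axis i (1::real)" by (metis add_cancel_left_right axis_eq_0_iff zero_neq_one)
    have nz2: "x \<noteq> x - axis i (1::real)" by (metis diff_0_right diff_left_imp_eq axis_eq_0_iff zero_neq_one)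
    show ?thesis
    proof (cases "bondF x (x + axis i 1) \<and> bondF x (x - axis i 1)")
      case True
      then have "(g (h *\<^sub>R (x + axis i 1)) - g u) * (if bondF x (x + axis i 1) then 1 else 0)
      + (g (h *\<^sub>R (x - axis i 1)) - g u) * (if bondF x (x - axis i 1) then 1 else 0)
        = H (u + h *\<^sub>R axis i 1) + H (u + (-h) *\<^sub>R axis i 1) - 2 * H u"
        using gy[of "x + axis i 1"] gy[of "x - axis i 1"] gu e1 e2 by simp
      then have "\<bar>(g (h *\<^sub>R (x + axis i 1)) - g u) * (if bondF x (x + axis i 1) then 1 else 0)
      + (g (h *\<^sub>R (x - axis i 1)) - g u) * (if bondF x (x - axis i 1) then 1 else 0)\<bar> \<le> 2 * h^2 * A"
        using vt(1)[of i] by simp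
      moreover have "0 \<le> (if i = L \<and> (x $ L = 0 \<or> x $ L = -1) then h * A else 0)" using A0 h by simp
      ultimately show ?thesis by linarith
    next
      case False
      then have ns: "bondS x (x + axis i 1) \<or> bondS x (x - axis i 1)"
        using nz1 nz2 unfolding bondF_def by auto
      have iL: "i = L \<and> (x $ L = 0 \<or> x $ L = -1)"
      proof (cases "i = L")
        case True
        then show ?thesis using ns xL int_between[of "x $ L"] int_between2[of "x $ L"]
          unfolding bondS_def L_def[symmetric] by (auto simp: axis_comp)
      next
        case False
        then show ?thesis using ns unfolding bondS_def L_def[symmetric] by (auto simp: axis_comp)
      qed
      have "\<bar>(g (h *\<^sub>R (x + axis i 1)) - g u) * (if bondF x (x + axis i 1) then 1 else 0)
      + (g (h *\<^sub>R (x - axis i 1)) - g u) * (if bondF x (x - axis i 1) then 1 else 0)\<bar> \<le> h * A"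
        using False gy[of "x + axis i 1"] gy[of "x - axis i 1"] gu e1 e2 vt(2,3) h A0
        by (auto simp: mult_nonneg_nonneg)
      moreover have "(if i = L \<and> (x $ L = 0 \<or> x $ L = -1) then h * A else 0) = h * A" using iL by simp
      moreover have "0 \<le> 2 * h^2 * A" using A0 by simp
      ultimately show ?thesis by linarith
    qed
  qed
  have "\<bar>\<Sum>y\<in>{y\<in>Zd. norm (y - x) = 1}.
        (g ((1 / real n) *\<^sub>R y) - g ((1 / real n) *\<^sub>R x)) * (if bondF x y then 1 else 0)\<bar>
     = \<bar>\<Sum>i\<in>UNIV. (g (h *\<^sub>R (x + axis i 1)) - g u) * (if bondF x (x + axis i 1) then 1 else 0)
      + (g (h *\<^sub>R (x - axis i 1)) - g u) * (if bondF x (x - axis i 1) then 1 else 0)\<bar>"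
    unfolding h_def[symmetric] u_def[symmetric] by (simp add: nbr_sum[OF x])
  also have "\<dots> \<le> (\<Sum>i\<in>UNIV. \<bar>(g (h *\<^sub>R (x + axis i 1)) - g u) * (if bondF x (x + axis i 1) then 1 else 0)
      + (g (h *\<^sub>R (x - axis i 1)) - g u) * (if bondF x (x - axis i 1) then 1 else 0)\<bar>)"
    by (rule sum_abs)
  also have "\<dots> \<le> (\<Sum>i\<in>UNIV. 2 * h^2 * A + (if i = L \<and> (x $ L = 0 \<or> x $ L = -1) then h * A else 0))"
    by (rule sum_mono) (rule tm)
  also have "\<dots> = real CARD('d) * (2 * h^2 * A) + (if x $ L = 0 \<or> x $ L = -1 then h * A else 0)"
    by (simp add: sum.distrib)
  finally show ?thesis by (simp only: h_def L_def)
qed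



lemma Ints_floor_eq: "(r::real) \<in> \<int> \<Longrightarrow> of_int \<lfloor>r\<rfloor> = r"
  by (auto elim: Ints_cases)

lemma card_box:
  fixes B :: "'d::finite \<Rightarrow> int set"
  assumes fin: "\<And>j. finite (B j)"
  shows "finite {x\<in>Zd. \<forall>j. \<lfloor>(x::(real,'d) vec) $ j\<rfloor> \<in> B j}"
    "card {x\<in>Zd. \<forall>j. \<lfloor>(x::(real,'d) vec) $ j\<rfloor> \<in> B j} \<le> (\<Prod>j\<in>UNIV. card (B j))"
proof -
  define S where "S = {x\<in>Zd. \<forall>j. \<lfloor>(x::(real,'d) vec) $ j\<rfloor> \<in> B j}"
  define \<phi> where "\<phi> = (\<lambda>x::(real,'d) vec. \<lambda>j. \<lfloor>x $ j\<rfloor>)"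
  have inj: "inj_on \<phi> S"
  proof (rule inj_onI)
    fix x y assume "x \<in> S" "y \<in> S" "\<phi> x = \<phi> y"
    then have "\<And>j. \<lfloor>x $ j\<rfloor> = \<lfloor>y $ j\<rfloor>" "\<And>j. x $ j \<in> \<int>" "\<And>j. y $ j \<in> \<int>"
      by (auto simp: \<phi>_def S_def Zd_def fun_eq_iff)
    then show "x = y" by (metis Ints_floor_eq vec_eq_iff)
  qed
  have sub: "\<phi> ` S \<subseteq> PiE UNIV B" by (auto simp: \<phi>_def S_def)
  have fP: "finite (PiE UNIV B)" using fin by (simp add: finite_PiE)
  then have "finite (\<phi> ` S)" using sub finite_subset by blast
  then show "finite {x\<in>Zd. \<forall>j. \<lfloor>(x::(real,'d) vec) $ j\<rfloor> \<in> B j}"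
    using inj finite_imageD S_def by blast
  have "card S = card (\<phi> ` S)" using inj by (simp add: card_image)
  also have "\<dots> \<le> card (PiE UNIV B)" using sub fP by (rule card_mono[rotated])
  also have "\<dots> = (\<Prod>j\<in>UNIV. card (B j))" by (simp add: card_PiE)
  finally show "card {x\<in>Zd. \<forall>j. \<lfloor>(x::(real,'d) vec) $ j\<rfloor> \<in> B j} \<le> (\<Prod>j\<in>UNIV. card (B j))"
    by (simp add: S_def)
qed

lemma sum_if_const: "finite F \<Longrightarrow> (\<Sum>x\<in>F. if P x then (c::real) else 0) = c * real (card {x\<in>F. P x})"
  by (simp add: sum.inter_filter[symmetric])

lemma box_sum:
  fixes F :: "(real,'d::{finite,linorder}) vec set" and N :: nat
  assumes F: "finite F" "F \<subseteq> Zd" and c: "c1 \<ge> 0" "c2 \<ge> 0"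
    and f: "\<And>x. x \<in> F \<Longrightarrow> f x \<le> (if (\<forall>j. \<bar>x $ j\<bar> \<le> real N) then c1 + (if x $ lastc = 0 \<or> x $ lastc = -1 then c2 else 0) else 0)"
  shows "(\<Sum>x\<in>F. f x) \<le> c1 * (2*real N+1) ^ CARD('d) + c2 * (2 * (2*real N+1) ^ (CARD('d) - 1))"
proof -
  define Bx where "Bx = {x\<in>Zd. \<forall>j. \<lfloor>(x::(real,'d) vec) $ j\<rfloor> \<in> {-int N..int N}}"
  define Bd where "Bd = {x\<in>Zd. \<forall>j. \<lfloor>(x::(real,'d) vec) $ j\<rfloor> \<in> (if j = lastc then {-1,0} else {-int N..int N})}"
  have fB: "finite Bx" "card Bx \<le> (\<Prod>j\<in>(UNIV::'d set). card {-int N..int N})"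
    unfolding Bx_def using card_box[of "\<lambda>_::'d. {-int N..int N}"] by auto
  have fD: "finite Bd" "card Bd \<le> (\<Prod>j\<in>(UNIV::'d set). card (if j = lastc then {-1,0} else {-int N..int N}))"
    unfolding Bd_def using card_box[of "\<lambda>j::'d. if j = lastc then {-1,0} else {-int N..int N}"] by auto
  have c1: "card {-int N..int N} = 2*N+1" by (simp add: nat_add_distrib nat_mult_distrib)
  have cB: "(\<Prod>j\<in>(UNIV::'d set). card {-int N..int N}) = (2*N+1) ^ CARD('d)" using c1 by simp
  have "(\<Prod>j\<in>(UNIV::'d set). card (if j = lastc then {-1,0::int} else {-int N..int N}))
      = card (if lastc = (lastc::'d) then {-1,0::int} else {-int N..int N}) *
        (\<Prod>j\<in>UNIV-{lastc::'d}. card (if j = lastc then {-1,0::int} else {-int N..int N}))"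
    by (rule prod.remove) auto
  also have "(\<Prod>j\<in>UNIV-{lastc::'d}. card (if j = lastc then {-1,0::int} else {-int N..int N}))
      = (\<Prod>j\<in>UNIV-{lastc::'d}. card {-int N..int N})" by (rule prod.cong) auto
  also have "card (if lastc = (lastc::'d) then {-1,0::int} else {-int N..int N}) *
        (\<Prod>j\<in>UNIV-{lastc::'d}. card {-int N..int N}) = 2 * (2*N+1) ^ (CARD('d) - 1)"
    using c1 by (simp add: card_Diff_singleton)
  finally have cD: "(\<Prod>j\<in>(UNIV::'d set). card (if j = lastc then {-1,0::int} else {-int N..int N})) = 2 * (2*N+1) ^ (CARD('d) - 1)" .
  have inbox: "(\<forall>j. \<bar>x $ j\<bar> \<le> real N) \<longleftrightarrow> x \<in> Bx" if "x \<in> Zd" for x :: "(real,'d) vec"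
  proof -
    have "\<bar>x $ j\<bar> \<le> real N \<longleftrightarrow> \<lfloor>x $ j\<rfloor> \<in> {-int N..int N}" for j
    proof -
      have "x $ j = of_int \<lfloor>x $ j\<rfloor>" using that Ints_floor_eq by (auto simp: Zd_def)
      then show ?thesis by (smt (verit, best) atLeastAtMost_iff of_int_le_iff of_int_minus of_int_of_nat_eq)
    qed
    then show ?thesis using that by (auto simp: Bx_def)
  qed
  have fl: "\<lfloor>-1::real\<rfloor> = -1" by (simp add: floor_minus)
  have inbd: "x \<in> Bd" if "x \<in> Bx" "x $ lastc = 0 \<or> x $ lastc = -1" for x :: "(real,'d) vec"
    using that fl unfolding Bx_def Bd_def by auto
  have "(\<Sum>x\<in>F. f x) \<le> (\<Sum>x\<in>F. (if x \<in> Bx then c1 else 0) + (if x \<in> Bx \<and> (x $ lastc = 0 \<or> x $ lastc = -1) then c2 else 0))"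
  proof (intro sum_mono)
    fix x assume x: "x \<in> F"
    then have xZ: "x \<in> Zd" using F by auto
    show "f x \<le> (if x \<in> Bx then c1 else 0) + (if x \<in> Bx \<and> (x $ lastc = 0 \<or> x $ lastc = -1) then c2 else 0)"
    proof -
      have fx: "f x \<le> (if x \<in> Bx then c1 + (if x $ lastc = 0 \<or> x $ lastc = -1 then c2 else 0) else 0)"
        using f[OF x, unfolded inbox[OF xZ]] .
      show ?thesis
      proof (cases "x \<in> Bx")
        case True
        then show ?thesis using fx by (simp only: True if_True simp_thms)
      next
        case False
        then show ?thesis using fx by (simp only: False if_False simp_thms add_0)
      qed
    qed
  qed
  also have "\<dots> = c1 * real (card {x\<in>F. x \<in> Bx}) + c2 * real (card {x\<in>F. x \<in> Bx \<and> (x $ lastc = 0 \<or> x $ lastc = -1)})"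
    unfolding sum.distrib sum_if_const[OF F(1), of "\<lambda>x. x \<in> Bx"]
      sum_if_const[OF F(1), of "\<lambda>x. x \<in> Bx \<and> (x $ lastc = 0 \<or> x $ lastc = -1)"] ..
  also have "\<dots> \<le> c1 * real (card Bx) + c2 * real (card Bd)"
  proof -
    have k1: "card {x\<in>F. x \<in> Bx} \<le> card Bx" by (rule card_mono[OF fB(1)]) blast
    have k2: "card {x\<in>F. x \<in> Bx \<and> (x $ lastc = 0 \<or> x $ lastc = -1)} \<le> card Bd"
      by (rule card_mono[OF fD(1)]) (blast intro: inbd)
    show ?thesis using k1 k2 c by (intro add_mono mult_left_mono) simp_all
  qed
  also have "\<dots> \<le> c1 * (2*real N+1) ^ CARD('d) + c2 * (2 * (2*real N+1) ^ (CARD('d) - 1))"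
  proof -
    have "card Bx \<le> (2*N+1) ^ CARD('d)" using fB(2) cB by simp
    then have "real (card Bx) \<le> real ((2*N+1) ^ CARD('d))" by (simp only: of_nat_le_iff)
    then have "real (card Bx) \<le> (2*real N+1) ^ CARD('d)" by (simp add: add.commute)
    moreover have "card Bd \<le> 2 * (2*N+1) ^ (CARD('d) - 1)" using fD(2) cD by simp
    then have "real (card Bd) \<le> real (2 * (2*N+1) ^ (CARD('d) - 1))" by (simp only: of_nat_le_iff)
    then have "real (card Bd) \<le> 2 * (2*real N+1) ^ (CARD('d) - 1)" by (simp add: add.commute)
    ultimately show ?thesis using c by (intro add_mono mult_left_mono) auto
  qed
  finally show ?thesis .
qed

lemma tele_bound:
  assumes n: "(n::real) \<ge> 1"
  shows "(\<Sum>m<K. n^2 / (n^2 + (real m)^2)) \<le> 4 * n"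
proof -
  have t: "n^2 / (n^2 + (real m)^2) \<le> 4 * n^2 * (1 / (n + real m) - 1 / (n + real (Suc m)))" for m
  proof -
    have p: "n + real m > 0" "n + real m + 1 > 0" using n by auto
    have eq: "1 / (n + real m) - 1 / (n + real (Suc m)) = 1 / ((n + real m) * (n + real m + 1))"
      using p by (simp add: field_simps)
    have le: "(n + real m) * (n + real m + 1) \<le> 4 * (n^2 + (real m)^2)"
    proof -
      have "real m \<le> (real m)^2" by (cases m) (auto simp: power2_eq_square)
      moreover have "n \<le> n^2" using n by (simp add: power2_eq_square)
      moreover have "2 * (n * real m) \<le> n^2 + (real m)^2"
        using sum_squares_bound[of n "real m"] by simp
      moreover have e: "(n + real m) * (n + real m + 1) = n^2 + (real m)^2 + 2 * (n * real m) + n + real m"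
        by (simp add: algebra_simps power2_eq_square)
      moreover have "0 \<le> n^2 + (real m)^2" by simp
      ultimately show ?thesis unfolding e by (smt (verit))
    qed
    have Q: "n^2 + (real m)^2 > 0" using n by (simp add: add_pos_nonneg)
    have "n^2 / (n^2 + (real m)^2) = (4 * n^2) / (4 * (n^2 + (real m)^2))"
      by (rule mult_divide_mult_cancel_left[symmetric]) simp
    also have "\<dots> \<le> (4 * n^2) / ((n + real m) * (n + real m + 1))"
      by (rule divide_left_mono) (use le p Q in auto)
    also have "\<dots> = 4 * n^2 * (1 / (n + real m) - 1 / (n + real (Suc m)))"
      unfolding eq by simp
    finally show ?thesis .
  qed
  have "(\<Sum>m<K. n^2 / (n^2 + (real m)^2)) \<le> (\<Sum>m<K. 4 * n^2 * (1 / (n + real m) - 1 / (n + real (Suc m))))"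
    by (rule sum_mono) (rule t)
  also have "\<dots> = 4 * n^2 * (\<Sum>m<K. (1 / (n + real m) - 1 / (n + real (Suc m))))"
    by (simp add: sum_distrib_left)
  also have "(\<Sum>m<K. (1 / (n + real m) - 1 / (n + real (Suc m)))) = 1 / n - 1 / (n + real K)"
    using sum_lessThan_telescope'[of "\<lambda>m. 1 / (n + real m)" K] by simp
  also have "4 * n^2 * (1 / n - 1 / (n + real K)) \<le> 4 * n^2 * (1 / n)"
    using n by (intro mult_left_mono) auto
  also have "\<dots> = 4 * n" using n by (simp add: power2_eq_square)
  finally show ?thesis .
qed



lemma C12c_bounds:
  fixes H :: "real \<Rightarrow> (real,'d::finite) vec \<Rightarrow> real"
  assumes "C12c T H"
  shows "\<exists>D1 D2 R. R \<ge> 0 \<and> (\<forall>s\<in>{0..T}. has_partials2 (H s) (D1 s) (D2 s)) \<and>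
     (\<forall>s\<in>{0..T}. \<forall>u. R < norm u \<longrightarrow> H s u = 0) \<and>
     (\<forall>\<rho>. \<exists>M. \<forall>s\<in>{0..T}. \<forall>v. norm v \<le> \<rho> \<longrightarrow> (\<forall>i j. \<bar>D1 s j v\<bar> \<le> M \<and> \<bar>D2 s i j v\<bar> \<le> M))"
proof -
  obtain Gt D1 D2 where w: "C12_with T H Gt D1 D2" and "\<exists>R. \<forall>s\<in>{0..T}. \<forall>u. R < norm u \<longrightarrow> H s u = 0"
    using assms unfolding C12c_def C12_def by blast
  then obtain R0 where R0: "\<forall>s\<in>{0..T}. \<forall>u. R0 < norm u \<longrightarrow> H s u = 0" by blast
  define R where "R = max R0 0"
  have R: "R \<ge> 0" "\<forall>s\<in>{0..T}. \<forall>u. R < norm u \<longrightarrow> H s u = 0" using R0 by (auto simp: R_def)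
  have p: "\<forall>s\<in>{0..T}. has_partials2 (H s) (D1 s) (D2 s)" using w by (simp add: C12_with_def)
  have c1: "\<And>j. continuous_on ({0..T} \<times> UNIV) (\<lambda>(s,u). D1 s j u)"
    using w by (simp add: C12_with_def jcont_def)
  have c2: "\<And>i j. continuous_on ({0..T} \<times> UNIV) (\<lambda>(s,u). D2 s i j u)"
    using w by (simp add: C12_with_def jcont_def)
  define Q where "Q = (\<lambda>p. (\<Sum>j\<in>UNIV. \<bar>(\<lambda>(s,u). D1 s j u) p\<bar>) + (\<Sum>i\<in>UNIV. \<Sum>j\<in>UNIV. \<bar>(\<lambda>(s,u). D2 s i j u) p\<bar>))"
  have "\<forall>\<rho>. \<exists>M. \<forall>s\<in>{0..T}. \<forall>v. norm v \<le> \<rho> \<longrightarrow> (\<forall>i j. \<bar>D1 s j v\<bar> \<le> M \<and> \<bar>D2 s i j v\<bar> \<le> M)"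
  proof
  fix \<rho> :: real
  define S where "S = {0..T} \<times> cball (0::(real,'d) vec) \<rho>"
  have cQ: "continuous_on S Q" unfolding Q_def S_def
    by (intro continuous_on_add continuous_on_sum continuous_on_rabs continuous_on_subset[OF c1]
        continuous_on_subset[OF c2]) auto
  have "compact S" unfolding S_def by (intro compact_Times) auto
  then have "compact (Q ` S)" using cQ compact_continuous_image by blast
  then obtain M where M: "\<forall>y\<in>Q ` S. norm y \<le> M" using compact_imp_bounded bounded_iff by metis
  have "\<forall>s\<in>{0..T}. \<forall>v. norm v \<le> \<rho> \<longrightarrow> (\<forall>i j. \<bar>D1 s j v\<bar> \<le> M \<and> \<bar>D2 s i j v\<bar> \<le> M)"
  proof (intro ballI allI impI)
    fix s i j and v :: "(real,'d) vec" assume s: "s \<in> {0..T}" and v: "norm v \<le> \<rho>"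
    then have "(s,v) \<in> S" by (simp add: S_def)
    then have QM: "\<bar>Q (s,v)\<bar> \<le> M" using M by auto
    have a: "\<bar>D1 s j v\<bar> \<le> (\<Sum>j\<in>UNIV. \<bar>D1 s j v\<bar>)"
      by (rule member_le_sum) auto
    have b0: "\<bar>D2 s i j v\<bar> \<le> (\<Sum>j\<in>UNIV. \<bar>D2 s i j v\<bar>)"
      by (rule member_le_sum) auto
    have b1: "(\<Sum>j\<in>UNIV. \<bar>D2 s i j v\<bar>) \<le> (\<Sum>i\<in>UNIV. \<Sum>j\<in>UNIV. \<bar>D2 s i j v\<bar>)"
      by (rule member_le_sum) (auto intro: sum_nonneg)
    have q: "Q (s,v) = (\<Sum>j\<in>UNIV. \<bar>D1 s j v\<bar>) + (\<Sum>i\<in>UNIV. \<Sum>j\<in>UNIV. \<bar>D2 s i j v\<bar>)"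
      by (simp add: Q_def)
    have n1: "0 \<le> (\<Sum>j\<in>UNIV. \<bar>D1 s j v\<bar>)" "0 \<le> (\<Sum>i\<in>UNIV. \<Sum>j\<in>UNIV. \<bar>D2 s i j v\<bar>)"
      by (auto intro: sum_nonneg)
    show "\<bar>D1 s j v\<bar> \<le> M \<and> \<bar>D2 s i j v\<bar> \<le> M" using a b0 b1 q n1 QM by linarith
  qed
  then show "\<exists>M. \<forall>s\<in>{0..T}. \<forall>v. norm v \<le> \<rho> \<longrightarrow> (\<forall>i j. \<bar>D1 s j v\<bar> \<le> M \<and> \<bar>D2 s i j v\<bar> \<le> M)" by blast
  qed
  then show ?thesis using R p by blast
qed

lemma S12_bounds:
  fixes H :: "real \<Rightarrow> (real,'d::finite) vec \<Rightarrow> real"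
  assumes "S12 T H"
  shows "\<exists>D1 D2 C. (\<forall>s\<in>{0..T}. has_partials2 (H s) (D1 s) (D2 s)) \<and>
     (\<forall>s\<in>{0..T}. \<forall>v i j. (1 + (norm v)^2) * \<bar>D1 s j v\<bar> \<le> C \<and> (1 + (norm v)^2) * \<bar>D2 s i j v\<bar> \<le> C)"
proof -
  obtain Gt D1 D2 and E1 :: "real \<Rightarrow> 'd \<Rightarrow> (real,'d) vec \<Rightarrow> real"
     and E2 :: "real \<Rightarrow> 'd \<Rightarrow> 'd \<Rightarrow> (real,'d) vec \<Rightarrow> real" where w: "C12_with T H Gt D1 D2" and
    dec: "\<forall>k::nat. \<exists>C. \<forall>s\<in>{0..T}. \<forall>u.
        norm u ^ k *
          ((\<bar>H s u\<bar> + (\<Sum>j\<in>UNIV. \<bar>D1 s j u\<bar>) + (\<Sum>i\<in>UNIV. \<Sum>j\<in>UNIV. \<bar>D2 s i j u\<bar>)) +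
           (\<bar>Gt s u\<bar> + (\<Sum>j\<in>UNIV. \<bar>E1 s j u\<bar>) + (\<Sum>i\<in>UNIV. \<Sum>j\<in>UNIV. \<bar>E2 s i j u\<bar>)))
        \<le> C"
    using assms unfolding S12_def by blast
  define P where "P = (\<lambda>s u. ((\<bar>H s u\<bar> + (\<Sum>j\<in>UNIV. \<bar>D1 s j u\<bar>) + (\<Sum>i\<in>UNIV. \<Sum>j\<in>UNIV. \<bar>D2 s i j u\<bar>)) +
           (\<bar>Gt s u\<bar> + (\<Sum>j\<in>UNIV. \<bar>E1 s j u\<bar>) + (\<Sum>i\<in>UNIV. \<Sum>j\<in>UNIV. \<bar>E2 s i j u\<bar>))))"
  obtain C0 where C0: "\<forall>s\<in>{0..T}. \<forall>u. norm u ^ 0 * P s u \<le> C0" using dec[rule_format, of 0] unfolding P_def by blast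
  obtain C2 where C2: "\<forall>s\<in>{0..T}. \<forall>u. norm u ^ 2 * P s u \<le> C2" using dec[rule_format, of 2] unfolding P_def by blast
  have p: "\<forall>s\<in>{0..T}. has_partials2 (H s) (D1 s) (D2 s)" using w by (simp add: C12_with_def)
  have "\<forall>s\<in>{0..T}. \<forall>v i j. (1 + (norm v)^2) * \<bar>D1 s j v\<bar> \<le> C0 + C2 \<and> (1 + (norm v)^2) * \<bar>D2 s i j v\<bar> \<le> C0 + C2"
  proof (intro ballI allI)
    fix s v i j assume s: "s \<in> {0..T}"
    have a: "\<bar>D1 s j v\<bar> \<le> (\<Sum>j\<in>UNIV. \<bar>D1 s j v\<bar>)"
      by (rule member_le_sum) auto
    have b0: "\<bar>D2 s i j v\<bar> \<le> (\<Sum>j\<in>UNIV. \<bar>D2 s i j v\<bar>)"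
      by (rule member_le_sum) auto
    have b1: "(\<Sum>j\<in>UNIV. \<bar>D2 s i j v\<bar>) \<le> (\<Sum>i\<in>UNIV. \<Sum>j\<in>UNIV. \<bar>D2 s i j v\<bar>)"
      by (rule member_le_sum) (auto intro: sum_nonneg)
    have n1: "0 \<le> (\<Sum>j\<in>UNIV. \<bar>D1 s j v\<bar>)" "0 \<le> (\<Sum>i\<in>UNIV. \<Sum>j\<in>UNIV. \<bar>D2 s i j v\<bar>)"
      "0 \<le> (\<Sum>j\<in>UNIV. \<bar>E1 s j v\<bar>)" "0 \<le> (\<Sum>i\<in>UNIV. \<Sum>j\<in>UNIV. \<bar>E2 s i j v\<bar>)"
      by (auto intro: sum_nonneg)
    have le1: "\<bar>D1 s j v\<bar> \<le> P s v" "\<bar>D2 s i j v\<bar> \<le> P s v"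
      using a b0 b1 n1 unfolding P_def by (smt (verit))+
    have "P s v \<le> C0" "(norm v)^2 * P s v \<le> C2" using C0 C2 s by auto
    then have "(1 + (norm v)^2) * P s v \<le> C0 + C2"
      by (simp add: distrib_right)
    moreover have "0 \<le> 1 + (norm v)^2" by simp
    ultimately show "(1 + (norm v)^2) * \<bar>D1 s j v\<bar> \<le> C0 + C2 \<and> (1 + (norm v)^2) * \<bar>D2 s i j v\<bar> \<le> C0 + C2"
      using le1 by (meson mult_left_mono order_trans)
  qed
  then show ?thesis using p by blast
qed



lemma one_idx:
  assumes "CARD('d::{finite,linorder}) = 1"
  shows "(j::'d) = lastc"
proof -
  obtain a :: 'd where a: "UNIV = {a}" using card_1_singleton_iff[of "UNIV::'d set"] assms by auto
  have "j \<in> {a}" "lastc \<in> {a}" unfolding a[symmetric] by simp_all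
  then show ?thesis by simp
qed

lemma half_sum:
  fixes S :: "(real,'d::{finite,linorder}) vec set" and n :: real and \<sigma> :: real
  assumes d1: "CARD('d) = 1" and S: "finite S" "S \<subseteq> Zd" and sg: "\<sigma> = 1 \<or> \<sigma> = -1"
    and pos: "\<And>x. x \<in> S \<Longrightarrow> 0 \<le> \<sigma> * x $ lastc" and n: "n \<ge> 1"
  shows "(\<Sum>x\<in>S. n^2 / (n^2 + (x $ lastc)^2)) \<le> 4 * n"
proof -
  define \<nu> where "\<nu> = (\<lambda>x::(real,'d) vec. nat \<lfloor>\<sigma> * x $ lastc\<rfloor>)"
  have rv: "real (\<nu> x) = \<sigma> * x $ lastc" if "x \<in> S" for x
  proof -
    have "x $ lastc \<in> \<int>" using that S by (auto simp: Zd_def)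
    then have "\<sigma> * x $ lastc \<in> \<int>" using sg by auto
    then have "of_int \<lfloor>\<sigma> * x $ lastc\<rfloor> = \<sigma> * x $ lastc" by (rule Ints_floor_eq)
    moreover have "\<lfloor>\<sigma> * x $ lastc\<rfloor> \<ge> 0" using pos[OF that] by simp
    ultimately show ?thesis unfolding \<nu>_def using of_nat_nat[of "\<lfloor>\<sigma> * x $ lastc\<rfloor>"] by simp
  qed
  have sq: "(real (\<nu> x))^2 = (x $ lastc)^2" if "x \<in> S" for x
    using rv[OF that] sg by (auto simp: power2_eq_square)
  have inj: "inj_on \<nu> S"
  proof (rule inj_onI)
    fix x y assume xy: "x \<in> S" "y \<in> S" "\<nu> x = \<nu> y"
    then have "real (\<nu> x) = real (\<nu> y)" by simp
    then have "\<sigma> * x $ lastc = \<sigma> * y $ lastc" using rv[OF xy(1)] rv[OF xy(2)] by simp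
    then have "x $ lastc = y $ lastc" using sg by auto
    then show "x = y" unfolding vec_eq_iff
    proof (intro allI)
      fix j :: 'd
      have "j = lastc" by (rule one_idx[OF d1])
      then show "x $ j = y $ j" using \<open>x $ lastc = y $ lastc\<close> by simp
    qed
  qed
  define g where "g = (\<lambda>m::nat. n^2 / (n^2 + (real m)^2))"
  have "(\<Sum>x\<in>S. n^2 / (n^2 + (x $ lastc)^2)) = (\<Sum>x\<in>S. g (\<nu> x))"
    by (rule sum.cong) (auto simp: g_def sq)
  also have "\<dots> = (\<Sum>m\<in>\<nu> ` S. g m)" by (simp add: sum.reindex[OF inj])
  also obtain K where K: "\<nu> ` S \<subseteq> {..<K}" using finite_nat_bounded S by blast
  then have "(\<Sum>m\<in>\<nu> ` S. g m) \<le> (\<Sum>m<K. g m)"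
    by (intro sum_mono2) (auto simp: g_def)
  also have "\<dots> \<le> 4 * n" unfolding g_def by (rule tele_bound[OF n])
  finally show ?thesis .
qed

lemma sum_w:
  fixes F :: "(real,'d::{finite,linorder}) vec set" and n :: real
  assumes d1: "CARD('d) = 1" and F: "finite F" "F \<subseteq> Zd" and n: "n \<ge> 1"
  shows "(\<Sum>x\<in>F. n^2 / (n^2 + (x $ lastc)^2)) \<le> 8 * n"
proof -
  define F1 where "F1 = {x\<in>F. 0 \<le> x $ lastc}"
  define F2 where "F2 = {x\<in>F. \<not> 0 \<le> x $ lastc}"
  have "(\<Sum>x\<in>F. n^2 / (n^2 + (x $ lastc)^2)) = (\<Sum>x\<in>F1. n^2 / (n^2 + (x $ lastc)^2)) + (\<Sum>x\<in>F2. n^2 / (n^2 + (x $ lastc)^2))"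
  proof -
    have "F = F1 \<union> F2" "F1 \<inter> F2 = {}" "finite F1" "finite F2" using F by (auto simp: F1_def F2_def)
    then show ?thesis using sum.union_disjoint[of F1 F2 "\<lambda>x. n^2 / (n^2 + (x $ lastc)^2)"] by simp
  qed
  also have "\<dots> \<le> 4 * n + 4 * n"
  proof -
    have f: "finite F1" "F1 \<subseteq> Zd" "finite F2" "F2 \<subseteq> Zd" using F by (auto simp: F1_def F2_def)
    have p1: "\<And>x. x \<in> F1 \<Longrightarrow> 0 \<le> 1 * x $ lastc" by (simp add: F1_def)
    have p2: "\<And>x. x \<in> F2 \<Longrightarrow> 0 \<le> -1 * x $ lastc" by (simp add: F2_def)
    have s1: "(1::real) = 1 \<or> (1::real) = -1" "(-1::real) = 1 \<or> (-1::real) = -1" by simp_all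
    show ?thesis
      using half_sum[OF d1 f(1,2) s1(1) p1 n] half_sum[OF d1 f(3,4) s1(2) p2 n] by (rule add_mono)
  qed
  finally show ?thesis by linarith
qed

lemma card_bd:
  fixes F :: "(real,'d::{finite,linorder}) vec set"
  assumes d1: "CARD('d) = 1" and F: "F \<subseteq> Zd"
  shows "card {x\<in>F. x $ lastc = 0 \<or> x $ lastc = -1} \<le> 2"
proof -
  have fl: "\<lfloor>-1::real\<rfloor> = -1" by (simp add: floor_minus)
  have sub: "{x\<in>F. x $ lastc = 0 \<or> x $ lastc = -1} \<subseteq> {x\<in>Zd. \<forall>j. \<lfloor>(x::(real,'d) vec) $ j\<rfloor> \<in> {-1,0}}"
  proof (intro subsetI CollectI conjI allI)
    fix x and j :: 'd assume x: "x \<in> {x\<in>F. x $ lastc = 0 \<or> x $ lastc = -1}"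
    then show "x \<in> Zd" using F by auto
    have "j = lastc" by (rule one_idx[OF d1])
    then show "\<lfloor>x $ j\<rfloor> \<in> {-1,0}" using x fl by auto
  qed
  note cb = card_box[of "\<lambda>_::'d. {-1,0::int}"]
  have "card {x\<in>F. x $ lastc = 0 \<or> x $ lastc = -1} \<le> card {x\<in>Zd. \<forall>j. \<lfloor>(x::(real,'d) vec) $ j\<rfloor> \<in> {-1,0}}"
    using cb(1) sub by (intro card_mono) auto
  also have "\<dots> \<le> (\<Prod>j\<in>(UNIV::'d set). card {-1,0::int})" using cb(2) by simp
  also have "\<dots> = 2" using d1 by simp
  finally show ?thesis .
qed



definition innr :: "(real \<Rightarrow> (real,'d::{finite,linorder}) vec \<Rightarrow> real) \<Rightarrow> real \<Rightarrow> nat \<Rightarrow> (real,'d) vec \<Rightarrow> real" where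
  "innr G s n x = (\<Sum>y\<in>{y\<in>Zd. norm (y - x) = 1}.
        (G s ((1 / real n) *\<^sub>R y) - G s ((1 / real n) *\<^sub>R x)) * (if bondF x y then 1 else 0))"

lemma arithA:
  fixes n W M a :: real and d :: nat
  assumes n: "n \<ge> 1" and a: "0 \<le> a" "a \<le> n * W" and M: "M \<ge> 0" and d: "d \<ge> 1"
  shows "real d * (2 * (1 / n)^2 * M) * a ^ d + (1 / n) * M * (2 * a ^ (d - 1))
    \<le> (2 * real d * M * W ^ d + 2 * M * W ^ (d - 1)) * n ^ d / n ^ 2"
proof -
  have p1: "a ^ d \<le> n ^ d * W ^ d" using power_mono[OF a(2) a(1), of d] by (simp add: power_mult_distrib)
  have p2: "a ^ (d - 1) \<le> n ^ (d - 1) * W ^ (d - 1)" using power_mono[OF a(2) a(1), of "d - 1"] by (simp add: power_mult_distrib)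
  have nd: "n ^ d = n * n ^ (d - 1)" using d by (cases d) auto
  have c1: "0 \<le> real d * (2 * (1 / n)^2 * M)" using M n by simp
  have c2: "0 \<le> (1 / n) * M * 2" using M n by simp
  have t1: "real d * (2 * (1 / n)^2 * M) * a ^ d \<le> real d * (2 * (1 / n)^2 * M) * (n ^ d * W ^ d)"
    by (rule mult_left_mono[OF p1 c1])
  have e1: "real d * (2 * (1 / n)^2 * M) * (n ^ d * W ^ d) = 2 * real d * M * W ^ d * n ^ d / n ^ 2"
    using n by (simp add: field_simps power2_eq_square)
  have t2: "(1 / n) * M * (2 * a ^ (d - 1)) \<le> (1 / n) * M * 2 * (n ^ (d - 1) * W ^ (d - 1))"
    using mult_left_mono[OF p2 c2] by (simp add: mult.assoc)
  have e2: "(1 / n) * M * 2 * (n ^ (d - 1) * W ^ (d - 1)) = 2 * M * W ^ (d - 1) * n ^ d / n ^ 2"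
    unfolding nd using n by (simp add: field_simps power2_eq_square)
  have e3: "(2 * real d * M * W ^ d + 2 * M * W ^ (d - 1)) * n ^ d / n ^ 2
     = 2 * real d * M * W ^ d * n ^ d / n ^ 2 + 2 * M * W ^ (d - 1) * n ^ d / n ^ 2"
    by (simp only: distrib_right add_divide_distrib)
  show ?thesis using t1 t2 unfolding e1 e2 e3 by linarith
qed

lemma caseA:
  fixes G Gm Gp :: "real \<Rightarrow> (real,'d::{finite,linorder}) vec \<Rightarrow> real"
  assumes Gm: "C12c T Gm" and Gp: "C12c T Gp"
    and G: "\<forall>t\<in>{0..T}. \<forall>u. G t u = (if u $ lastc < 0 then Gm t u else Gp t u)"
  shows "\<exists>K. \<forall>n\<ge>1. \<forall>s\<in>{0..T}. \<forall>F. finite F \<longrightarrow> F \<subseteq> Zd \<longrightarrow>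
     (\<Sum>x\<in>F. \<bar>innr G s n x\<bar>) \<le> K * real n ^ CARD('d) / real n ^ 2"
proof -
  obtain D1m D2m Rm where Rm: "Rm \<ge> 0" and pm: "\<forall>s\<in>{0..T}. has_partials2 (Gm s) (D1m s) (D2m s)"
    and zm: "\<forall>s\<in>{0..T}. \<forall>u. Rm < norm u \<longrightarrow> Gm s u = 0"
    and bm0: "\<forall>\<rho>. \<exists>M. \<forall>s\<in>{0..T}. \<forall>v. norm v \<le> \<rho> \<longrightarrow> (\<forall>i j. \<bar>D1m s j v\<bar> \<le> M \<and> \<bar>D2m s i j v\<bar> \<le> M)"
    using C12c_bounds[OF Gm] by blast
  obtain D1p D2p Rp where Rp: "Rp \<ge> 0" and pp: "\<forall>s\<in>{0..T}. has_partials2 (Gp s) (D1p s) (D2p s)"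
    and zp: "\<forall>s\<in>{0..T}. \<forall>u. Rp < norm u \<longrightarrow> Gp s u = 0"
    and bp0: "\<forall>\<rho>. \<exists>M. \<forall>s\<in>{0..T}. \<forall>v. norm v \<le> \<rho> \<longrightarrow> (\<forall>i j. \<bar>D1p s j v\<bar> \<le> M \<and> \<bar>D2p s i j v\<bar> \<le> M)"
    using C12c_bounds[OF Gp] by blast
  define R where "R = max Rm Rp"
  have R: "R \<ge> 0" "Rm \<le> R" "Rp \<le> R" using Rm by (auto simp: R_def)
  obtain Mm where bm: "\<forall>s\<in>{0..T}. \<forall>v. norm v \<le> R + 2 \<longrightarrow> (\<forall>i j. \<bar>D1m s j v\<bar> \<le> Mm \<and> \<bar>D2m s i j v\<bar> \<le> Mm)"
    using bm0 by blast
  obtain Mp where bp: "\<forall>s\<in>{0..T}. \<forall>v. norm v \<le> R + 2 \<longrightarrow> (\<forall>i j. \<bar>D1p s j v\<bar> \<le> Mp \<and> \<bar>D2p s i j v\<bar> \<le> Mp)"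
    using bp0 by blast
  define M where "M = max (max Mm Mp) 0"
  have M: "M \<ge> 0" "Mm \<le> M" "Mp \<le> M" by (auto simp: M_def)
  define W where "W = 2 * R + 5"
  define K where "K = 2 * real CARD('d) * M * W ^ CARD('d) + 2 * M * W ^ (CARD('d) - 1)"
  show ?thesis
  proof (intro exI allI impI ballI)
    fix n :: nat and s :: real and F :: "(real,'d) vec set" assume n: "n \<ge> 1" and s: "s \<in> {0..T}" and F: "finite F" "F \<subseteq> Zd"
    define h where "h = 1 / real n"
    have h: "h > 0" "h \<le> 1" using n by (auto simp: h_def)
    define N where "N = nat \<lceil>real n * (R + 1)\<rceil>"
    define c1 where "c1 = real CARD('d) * (2 * (1 / real n)^2 * M)"
    define c2 where "c2 = (1 / real n) * M"
    have c: "c1 \<ge> 0" "c2 \<ge> 0" using M by (auto simp: c1_def c2_def)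
    have gs: "\<And>u. G s u = (if u $ lastc < 0 then Gm s u else Gp s u)" using G s by auto
    have pt: "\<bar>innr G s n x\<bar> \<le> (if (\<forall>j. \<bar>x $ j\<bar> \<le> real N) then c1 + (if x $ lastc = 0 \<or> x $ lastc = -1 then c2 else 0) else 0)"
      if x: "x \<in> Zd" for x
    proof (cases "norm (h *\<^sub>R x) \<le> R + 1")
      case True
      have nx: "norm x = real n * norm (h *\<^sub>R x)" using n by (simp add: h_def)
      have "real n * norm (h *\<^sub>R x) \<le> real n * (R + 1)" using True by (intro mult_left_mono) auto
      also have "\<dots> \<le> real N" unfolding N_def by (rule real_nat_ceiling_ge)
      finally have "norm x \<le> real N" unfolding nx .
      then have box: "\<forall>j. \<bar>x $ j\<bar> \<le> real N" using component_le_norm_cart order_trans by blast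
      have bb: "\<bar>D1m s i v\<bar> \<le> M \<and> \<bar>D2m s i i v\<bar> \<le> M \<and> \<bar>D1p s i v\<bar> \<le> M \<and> \<bar>D2p s i i v\<bar> \<le> M"
        if v: "norm (v - (1 / real n) *\<^sub>R x) \<le> 1 / real n" for v i
      proof -
        have "norm v \<le> norm (h *\<^sub>R x) + norm (v - h *\<^sub>R x)" by (rule norm_triangle_sub)
        also have "\<dots> \<le> R + 2" using True v h(2) unfolding h_def by linarith
        finally have "norm v \<le> R + 2" .
        then show ?thesis using bm bp s M by (meson order_trans)
      qed
      have "\<bar>innr G s n x\<bar> \<le> c1 + (if x $ lastc = 0 \<or> x $ lastc = -1 then c2 else 0)"
        unfolding innr_def c1_def c2_def
        by (rule pointwise[OF pm[rule_format, OF s] pp[rule_format, OF s] n x gs bb])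
      then show ?thesis using box by simp
    next
      case False
      have gz: "G s (h *\<^sub>R y) = 0" if "norm (y - x) = 1" for y
      proof -
        have "norm (h *\<^sub>R x) \<le> norm (h *\<^sub>R y) + norm (h *\<^sub>R x - h *\<^sub>R y)" by (rule norm_triangle_sub)
        also have "norm (h *\<^sub>R x - h *\<^sub>R y) = norm (h *\<^sub>R (y - x))"
          by (simp add: norm_minus_commute scaleR_diff_right)
        finally have "norm (h *\<^sub>R x) \<le> norm (h *\<^sub>R y) + norm (h *\<^sub>R (y - x))" .
        then have "norm (h *\<^sub>R y) > R" using False that h by simp
        then show ?thesis using gs zm zp s R by auto
      qed
      have gx: "G s (h *\<^sub>R x) = 0" using False gs zm zp s R by auto
      have "innr G s n x = 0" unfolding innr_def h_def[symmetric]
        by (rule sum.neutral) (use gz gx in auto)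
      then show ?thesis using c by simp
    qed
    have "(\<Sum>x\<in>F. \<bar>innr G s n x\<bar>) \<le> c1 * (2*real N+1) ^ CARD('d) + c2 * (2 * (2*real N+1) ^ (CARD('d) - 1))"
    proof (rule box_sum[OF F c])
      fix x assume "x \<in> F"
      then have "x \<in> Zd" using F by auto
      then show "\<bar>innr G s n x\<bar> \<le> (if (\<forall>j. \<bar>x $ j\<bar> \<le> real N) then c1 + (if x $ lastc = 0 \<or> x $ lastc = -1 then c2 else 0) else 0)"
        by (rule pt)
    qed
    also have "\<dots> \<le> K * real n ^ CARD('d) / real n ^ 2"
    proof -
      have "real N < real n * (R + 1) + 1"
        unfolding N_def using R by (simp add: of_nat_nat) linarith
      then have "2 * real N + 1 \<le> real n * W" using n unfolding W_def by (simp add: algebra_simps)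
      then show ?thesis unfolding c1_def c2_def K_def
        using arithA[of "real n" "2 * real N + 1" W M "CARD('d)"] n M by (simp add: mult.assoc)
    qed
    finally show "(\<Sum>x\<in>F. \<bar>innr G s n x\<bar>) \<le> K * real n ^ CARD('d) / real n ^ 2" .
  qed
qed

lemma caseB:
  fixes G Gm Gp :: "real \<Rightarrow> (real,'d::{finite,linorder}) vec \<Rightarrow> real"
  assumes d1: "CARD('d) = 1" and Gm: "S12 T Gm" and Gp: "S12 T Gp"
    and G: "\<forall>t\<in>{0..T}. \<forall>u. G t u = (if u $ lastc < 0 then Gm t u else Gp t u)"
  shows "\<exists>K. \<forall>n\<ge>1. \<forall>s\<in>{0..T}. \<forall>F. finite F \<longrightarrow> F \<subseteq> Zd \<longrightarrow>
     (\<Sum>x\<in>F. \<bar>innr G s n x\<bar>) \<le> K * real n ^ CARD('d) / real n ^ 2"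
proof -
  obtain D1m D2m Cm where pm: "\<forall>s\<in>{0..T}. has_partials2 (Gm s) (D1m s) (D2m s)"
    and bm: "\<forall>s\<in>{0..T}. \<forall>v i j. (1 + (norm v)^2) * \<bar>D1m s j v\<bar> \<le> Cm \<and> (1 + (norm v)^2) * \<bar>D2m s i j v\<bar> \<le> Cm"
    using S12_bounds[OF Gm] by blast
  obtain D1p D2p Cp where pp: "\<forall>s\<in>{0..T}. has_partials2 (Gp s) (D1p s) (D2p s)"
    and bp: "\<forall>s\<in>{0..T}. \<forall>v i j. (1 + (norm v)^2) * \<bar>D1p s j v\<bar> \<le> Cp \<and> (1 + (norm v)^2) * \<bar>D2p s i j v\<bar> \<le> Cp"
    using S12_bounds[OF Gp] by blast
  define C where "C = max (max Cm Cp) 0"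
  have C: "C \<ge> 0" "Cm \<le> C" "Cp \<le> C" by (auto simp: C_def)
  show ?thesis
  proof (intro exI allI impI ballI)
    fix n :: nat and s :: real and F :: "(real,'d) vec set" assume n: "n \<ge> 1" and s: "s \<in> {0..T}" and F: "finite F" "F \<subseteq> Zd"
    define h where "h = 1 / real n"
    have h: "h > 0" "h \<le> 1" using n by (auto simp: h_def)
    have rn: "real n \<ge> 1" using n by simp
    have gs: "\<And>u. G s u = (if u $ lastc < 0 then Gm s u else Gp s u)" using G s by auto
    define w where "w = (\<lambda>x::(real,'d) vec. (real n)^2 / ((real n)^2 + (x $ lastc)^2))"
    have pt: "\<bar>innr G s n x\<bar> \<le> (6 * C / (real n)^2) * w x + (if x $ lastc = 0 \<or> x $ lastc = -1 then 3 * C / real n else 0)"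
      if x: "x \<in> Zd" for x
    proof -
      define u where "u = h *\<^sub>R x"
      define A where "A = 3 * C / (1 + (norm u)^2)"
      have pu: "1 + (norm u)^2 > 0" by (simp add: add_pos_nonneg)
      have bb: "\<bar>D1m s i v\<bar> \<le> A \<and> \<bar>D2m s i i v\<bar> \<le> A \<and> \<bar>D1p s i v\<bar> \<le> A \<and> \<bar>D2p s i i v\<bar> \<le> A"
        if v: "norm (v - (1 / real n) *\<^sub>R x) \<le> 1 / real n" for v i
      proof -
        have "norm u \<le> norm v + norm (u - v)" by (rule norm_triangle_sub)
        moreover have "norm (u - v) \<le> 1" using v h(2) unfolding u_def h_def by (simp add: norm_minus_commute)
        ultimately have nu: "norm u \<le> norm v + 1" by linarith
        have "(norm u)^2 \<le> (norm v + 1)^2" using nu by (intro power_mono) auto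
        moreover have "2 * norm v \<le> (norm v)^2 + 1" using sum_squares_bound[of "norm v" 1] by simp
        moreover have "(norm v + 1)^2 = (norm v)^2 + 2 * norm v + 1" by (simp add: power2_eq_square algebra_simps)
        moreover have "0 \<le> (norm v)^2" by simp
        ultimately have q: "1 + (norm u)^2 \<le> 3 * (1 + (norm v)^2)" by (smt (verit))
        have key: "\<bar>D\<bar> \<le> A" if hD: "(1 + (norm v)^2) * \<bar>D\<bar> \<le> C" for D
        proof -
          have "\<bar>D\<bar> * (1 + (norm u)^2) \<le> \<bar>D\<bar> * (3 * (1 + (norm v)^2))" by (rule mult_left_mono[OF q]) simp
          also have "\<dots> = 3 * ((1 + (norm v)^2) * \<bar>D\<bar>)" by simp
          also have "\<dots> \<le> 3 * C" using hD by simp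
          finally show ?thesis unfolding A_def using pu by (simp add: pos_le_divide_eq)
        qed
        show ?thesis using bm bp s C by (intro conjI key; meson order_trans)
      qed
      have pw: "\<bar>innr G s n x\<bar> \<le> real CARD('d) * (2 * (1 / real n)^2 * A) + (if x $ lastc = 0 \<or> x $ lastc = -1 then (1 / real n) * A else 0)"
        unfolding innr_def by (rule pointwise[OF pm[rule_format, OF s] pp[rule_format, OF s] n x gs bb])
      have A3: "A \<le> 3 * C"
      proof -
        have "3 * C * 1 \<le> 3 * C * (1 + (norm u)^2)" using C by (intro mult_left_mono) auto
        then show ?thesis unfolding A_def using pu by (simp add: pos_divide_le_eq)
      qed
      have Aw: "A \<le> 3 * C * w x"
      proof -
        have "\<bar>u $ lastc\<bar> \<le> norm u" by (rule component_le_norm_cart)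
        then have "(u $ lastc)^2 \<le> (norm u)^2" by (metis abs_ge_zero power2_abs power_mono)
        moreover have "u $ lastc = x $ lastc / real n" by (simp add: u_def h_def)
        ultimately have le: "(x $ lastc / real n)^2 \<le> (norm u)^2" by simp
        have e: "1 + (x $ lastc / real n)^2 = ((real n)^2 + (x $ lastc)^2) / (real n)^2"
          using rn by (simp add: field_simps power2_eq_square)
        have p2: "0 < ((real n)^2 + (x $ lastc)^2) / (real n)^2" using rn by (simp add: add_pos_nonneg)
        have "A = 3 * C / (1 + (norm u)^2)" by (simp add: A_def)
        also have "\<dots> \<le> 3 * C / (((real n)^2 + (x $ lastc)^2) / (real n)^2)"
          by (rule divide_left_mono) (use le e p2 C pu mult_pos_pos[OF pu p2] in auto)
        also have "\<dots> = 3 * C * w x" unfolding w_def by simp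
        finally show ?thesis .
      qed
      have "real CARD('d) * (2 * (1 / real n)^2 * A) \<le> (6 * C / (real n)^2) * w x"
        using Aw d1 rn by (simp add: field_simps power2_eq_square)
      moreover have "(if x $ lastc = 0 \<or> x $ lastc = -1 then (1 / real n) * A else 0) \<le> (if x $ lastc = 0 \<or> x $ lastc = -1 then 3 * C / real n else 0)"
        using A3 rn by (simp add: divide_right_mono)
      ultimately show ?thesis using pw by linarith
    qed
    have "(\<Sum>x\<in>F. \<bar>innr G s n x\<bar>) \<le> (\<Sum>x\<in>F. (6 * C / (real n)^2) * w x + (if x $ lastc = 0 \<or> x $ lastc = -1 then 3 * C / real n else 0))"
    proof (rule sum_mono)
      fix x assume "x \<in> F"
      then have "x \<in> Zd" using F by auto
      then show "\<bar>innr G s n x\<bar> \<le> (6 * C / (real n)^2) * w x + (if x $ lastc = 0 \<or> x $ lastc = -1 then 3 * C / real n else 0)"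
        by (rule pt)
    qed
    also have "\<dots> = (6 * C / (real n)^2) * (\<Sum>x\<in>F. w x) + 3 * C / real n * real (card {x\<in>F. x $ lastc = 0 \<or> x $ lastc = -1})"
      unfolding sum.distrib sum_distrib_left[symmetric] sum_if_const[OF F(1)] ..
    also have "\<dots> \<le> (6 * C / (real n)^2) * (8 * real n) + 3 * C / real n * 2"
    proof (rule add_mono)
      show "(6 * C / (real n)^2) * (\<Sum>x\<in>F. w x) \<le> (6 * C / (real n)^2) * (8 * real n)"
        unfolding w_def by (rule mult_left_mono[OF sum_w[OF d1 F rn]]) (use C in simp)
      have "real (card {x\<in>F. x $ lastc = 0 \<or> x $ lastc = -1}) \<le> 2" using card_bd[OF d1 F(2)] by simp
      then show "3 * C / real n * real (card {x\<in>F. x $ lastc = 0 \<or> x $ lastc = -1}) \<le> 3 * C / real n * 2"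
        by (rule mult_left_mono) (use C in simp)
    qed
    also have "\<dots> = (54 * C) * real n ^ CARD('d) / real n ^ 2"
      using d1 rn by (simp add: field_simps power2_eq_square)
    finally show "(\<Sum>x\<in>F. \<bar>innr G s n x\<bar>) \<le> (54 * C) * real n ^ CARD('d) / real n ^ 2" .
  qed
qed

lemma ennreal_bound_lim:
  fixes Y :: "nat \<Rightarrow> ennreal"
  assumes b: "\<And>n. n \<ge> 1 \<Longrightarrow> Y n \<le> ennreal (K * real n powr (\<gamma> - 2))" and g: "\<gamma> < 2"
  shows "Y \<longlonglongrightarrow> 0"
proof (rule tendsto_sandwich[of "\<lambda>n. 0" Y sequentially "\<lambda>n. ennreal (K * real n powr (\<gamma> - 2))"])
  show "\<forall>\<^sub>F n in sequentially. 0 \<le> Y n" by simp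
  show "\<forall>\<^sub>F n in sequentially. Y n \<le> ennreal (K * real n powr (\<gamma> - 2))"
    using b eventually_sequentially by blast
  show "(\<lambda>n. 0) \<longlonglongrightarrow> (0::ennreal)" by simp
  have "(\<lambda>n. real n powr (\<gamma> - 2)) \<longlonglongrightarrow> 0"
    using g by (intro tendsto_neg_powr filterlim_real_sequentially) simp
  then have "(\<lambda>n. K * real n powr (\<gamma> - 2)) \<longlonglongrightarrow> K * 0" by (intro tendsto_mult tendsto_const)
  then have "(\<lambda>n. ennreal (K * real n powr (\<gamma> - 2))) \<longlonglongrightarrow> ennreal (K * 0)" by (rule tendsto_ennrealI)
  then show "(\<lambda>n. ennreal (K * real n powr (\<gamma> - 2))) \<longlonglongrightarrow> 0" by simp
qed

theorem mainTheorem6: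
  fixes T \<gamma> :: real and G :: "real \<Rightarrow> (real,'d::{finite,linorder}) vec \<Rightarrow> real"
  assumes "T > 0" and "0 < \<gamma>" and "\<gamma> < 2" and "S_gamma0 T \<gamma> G"
  shows "Y_SEP T \<gamma> G \<longlonglongrightarrow> 0"
proof -
  obtain Gm Gp where Sm: "S_gamma T \<gamma> Gm" and Sp: "S_gamma T \<gamma> Gp"
    and G: "\<forall>t\<in>{0..T}. \<forall>u. G t u = (if u $ lastc < 0 then Gm t u else Gp t u)"
    using assms(4) unfolding S_gamma0_def by blast
  have "\<exists>K. \<forall>n\<ge>1. \<forall>s\<in>{0..T}. \<forall>F. finite F \<longrightarrow> F \<subseteq> Zd \<longrightarrow>
     (\<Sum>x\<in>F. \<bar>innr G s n x\<bar>) \<le> K * real n ^ CARD('d) / real n ^ 2"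
  proof (cases "\<gamma> \<le> 1 \<or> CARD('d) \<ge> 2")
    case True
    then have "C12c T Gm" "C12c T Gp" using Sm Sp by (simp_all add: S_gamma_def)
    then show ?thesis using caseA G by blast
  next
    case False
    then have m: "S12 T Gm" "S12 T Gp" using Sm Sp by (simp_all add: S_gamma_def)
    have "0 < CARD('d)" by simp
    then have "CARD('d) = 1" using False by linarith
    then show ?thesis using caseB[OF _ m G] by blast
  qed
  then obtain K where K: "\<forall>n\<ge>1. \<forall>s\<in>{0..T}. \<forall>F. finite F \<longrightarrow> F \<subseteq> Zd \<longrightarrow>
     (\<Sum>x\<in>F. \<bar>innr G s n x\<bar>) \<le> K * real n ^ CARD('d) / real n ^ 2" by blast
  have "0 \<in> {0..T}" using assms(1) by simp
  then have "(\<Sum>x\<in>{}. \<bar>innr G 0 1 x\<bar>) \<le> K * real 1 ^ CARD('d) / real 1 ^ 2" using K by blast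
  then have K0: "K \<ge> 0" by simp
  have bound: "Y_SEP T \<gamma> G n \<le> ennreal (K * real n powr (\<gamma> - 2))" if n: "n \<ge> 1" for n
  proof -
    have rn: "real n \<ge> 1" using n by simp
    have Yeq: "Y_SEP T \<gamma> G n = (SUP s\<in>{0..T}. ennreal (real n powr \<gamma> / real n ^ CARD('d)) *
        (\<Sum>\<^sub>\<infinity>x\<in>Zd. ennreal \<bar>innr G s n x\<bar>))"
      by (simp add: Y_SEP_def innr_def)
    show ?thesis unfolding Yeq
    proof (rule SUP_least)
      fix s assume s: "s \<in> {0..T}"
      have inf: "(\<Sum>\<^sub>\<infinity>x\<in>Zd. ennreal \<bar>innr G s n x\<bar>) \<le> ennreal (K * real n ^ CARD('d) / real n ^ 2)"
      proof (rule infsum_le_finite_sums)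
        show "(\<lambda>x. ennreal \<bar>innr G s n x\<bar>) summable_on Zd" by (simp add: nonneg_summable_on_complete)
        fix F :: "(real,'d) vec set" assume F: "finite F" "F \<subseteq> Zd"
        have "(\<Sum>x\<in>F. ennreal \<bar>innr G s n x\<bar>) = ennreal (\<Sum>x\<in>F. \<bar>innr G s n x\<bar>)"
          by (rule sum_ennreal) simp
        also have "\<dots> \<le> ennreal (K * real n ^ CARD('d) / real n ^ 2)"
          by (rule ennreal_leI) (use K n s F in blast)
        finally show "(\<Sum>x\<in>F. ennreal \<bar>innr G s n x\<bar>) \<le> ennreal (K * real n ^ CARD('d) / real n ^ 2)" .
      qed
      have a0: "0 \<le> real n powr \<gamma> / real n ^ CARD('d)" by simp
      have b0: "0 \<le> K * real n ^ CARD('d) / real n ^ 2" using K0 by simp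
      have "ennreal (real n powr \<gamma> / real n ^ CARD('d)) * (\<Sum>\<^sub>\<infinity>x\<in>Zd. ennreal \<bar>innr G s n x\<bar>)
          \<le> ennreal (real n powr \<gamma> / real n ^ CARD('d)) * ennreal (K * real n ^ CARD('d) / real n ^ 2)"
        by (rule mult_left_mono[OF inf]) simp
      also have "\<dots> = ennreal (real n powr \<gamma> / real n ^ CARD('d) * (K * real n ^ CARD('d) / real n ^ 2))"
        by (rule ennreal_mult[OF a0 b0, symmetric])
      also have "real n powr \<gamma> / real n ^ CARD('d) * (K * real n ^ CARD('d) / real n ^ 2) = K * real n powr (\<gamma> - 2)"
      proof -
        have "real n powr (\<gamma> - 2) = real n powr \<gamma> / real n powr 2" by (rule powr_diff)
        also have "real n powr 2 = real n ^ 2" using rn by simp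
        finally have e: "real n powr (\<gamma> - 2) = real n powr \<gamma> / real n ^ 2" .
        have "real n ^ CARD('d) > 0" using rn by simp
        then show ?thesis unfolding e by (simp add: field_simps)
      qed
      finally show "ennreal (real n powr \<gamma> / real n ^ CARD('d)) * (\<Sum>\<^sub>\<infinity>x\<in>Zd. ennreal \<bar>innr G s n x\<bar>)
          \<le> ennreal (K * real n powr (\<gamma> - 2))" .
    qed
  qed
  show ?thesis by (rule ennreal_bound_lim[OF bound assms(3)])
qed

end
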